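(* Let $u=u_1\cdots u_n$ be a word over a finite alphabet and let $s$ be a nonempty factor of $u$. Let $\mathit{first}(s)$ and $\mathit{last}(s)$ be the smallest and the largest starting positions of occurrences of $s$ in $u$. Then $s$ is a border seed of $u$ if and only if $$|s|\ \ge\ \max\Big(\mathrm{per}\big(u[1 .. \mathit{first}(s)+|s|-1]\big),\ \mathrm{per}\big(u[\mathit{last}(s) .. n]\big)\Big).$$
   Context: Positions in a word $u$ are numbered $1,\dots,|u|$; $u[i..j]=u_i\cdots u_j$ is a factor. For a nonempty word $x$, $\mathrm{per}(x)$ is the smallest positive integer $p$ such that $x_i=x_{i+p}$ for all $1\le i\le |x|-p$. A word $s$ covers a word $w$ if every position of $w$ lies inside some occurrence of $s$ as a factor of $w$. A word $s$ is a seed of $u$ if $s$ is a factor of $u$ and $u$ is a factor of some word $w$ covered by $s$. For a factor $s$ of $u$, decompose $u=w_1w_2w_3$ where $w_2=u[\mathit{first}(s) .. \mathit{last}(s)+|s|-1]$ (the longest factor of $u$ having $s$ as a border); $s$ is called a border seed of $u$ if $s$ is a seed of the word $w_1\, s\, w_3$. *)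

theory Defs
  imports "HOL-Library.Sublist"
begin

text \<open>Words are lists; positions are numbered 1..length u.\<close>

definition fac :: "'a list \<Rightarrow> nat \<Rightarrow> nat \<Rightarrow> 'a list" where
  "fac u i j = take (Suc j - i) (drop (i - 1) u)"   \<comment> \<open>u[i..j] = u_i ... u_j\<close>

definition occ_at :: "'a list \<Rightarrow> 'a list \<Rightarrow> nat \<Rightarrow> bool" where
  "occ_at u s i \<longleftrightarrow> 1 \<le> i \<and> i + length s - 1 \<le> length u \<and> fac u i (i + length s - 1) = s"

definition per :: "'a list \<Rightarrow> nat" where
  "per x = (LEAST p. 0 < p \<and> (\<forall>i. 1 \<le> i \<and> i + p \<le> length x \<longrightarrow> x ! (i - 1) = x ! (i + p - 1)))"

definition covers :: "'a list \<Rightarrow> 'a list \<Rightarrow> bool" where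
  "covers s w \<longleftrightarrow> (\<forall>k. 1 \<le> k \<and> k \<le> length w \<longrightarrow>
      (\<exists>i. occ_at w s i \<and> i \<le> k \<and> k \<le> i + length s - 1))"

definition seed :: "'a list \<Rightarrow> 'a list \<Rightarrow> bool" where
  "seed s u \<longleftrightarrow> sublist s u \<and> (\<exists>w. covers s w \<and> sublist u w)"

definition first_occ :: "'a list \<Rightarrow> 'a list \<Rightarrow> nat" where
  "first_occ s u = (LEAST i. occ_at u s i)"

definition last_occ :: "'a list \<Rightarrow> 'a list \<Rightarrow> nat" where
  "last_occ s u = (GREATEST i. occ_at u s i)"

text \<open>u = w1 w2 w3 with w2 = u[first(s) .. last(s)+|s|-1]; border seed: seed of w1 s w3.\<close>
definition border_seed :: "'a list \<Rightarrow> 'a list \<Rightarrow> bool" where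
  "border_seed s u \<longleftrightarrow>
     seed s (take (first_occ s u - 1) u @ s @ drop (last_occ s u + length s - 1) u)"

end

theory Submission
  imports Defs
begin

definition occ0 :: "'a list \<Rightarrow> 'a list \<Rightarrow> nat \<Rightarrow> bool" where
  "occ0 w s q \<longleftrightarrow> q + length s \<le> length w \<and> (\<forall>t<length s. w!(q+t) = s!t)"

definition cov :: "'a list \<Rightarrow> 'a list \<Rightarrow> bool" where
  "cov s w \<longleftrightarrow> (\<forall>k<length w. \<exists>q. occ0 w s q \<and> q \<le> k \<and> k < q + length s)"

definition period :: "nat \<Rightarrow> 'a list \<Rightarrow> bool" where
  "period p x \<longleftrightarrow> (\<forall>j. j + p < length x \<longrightarrow> x!j = x!(j+p))"

lemma take_eq_nth: "k + length s \<le> length u \<Longrightarrow>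
   (take (length s) (drop k u) = s) \<longleftrightarrow> (\<forall>t<length s. u!(k+t) = s!t)"
  by (auto simp: list_eq_iff_nth_eq)

lemma occ_at_occ0: "occ_at u s i \<longleftrightarrow> 1 \<le> i \<and> occ0 u s (i-1)"
proof (cases "1 \<le> i")
  case True
  then have f: "fac u i (i + length s - 1) = take (length s) (drop (i-1) u)"
    by (simp add: fac_def)
  have e: "i + length s - 1 = (i - 1) + length s" using True by simp
  have "occ_at u s i \<longleftrightarrow> (i - 1) + length s \<le> length u \<and> take (length s) (drop (i-1) u) = s"
    unfolding occ_at_def using True f e by simp
  also have "\<dots> \<longleftrightarrow> occ0 u s (i-1)"
    unfolding occ0_def using take_eq_nth[of "i-1" s u] by blast
  finally show ?thesis using True by simp
qed (simp add: occ_at_def)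

lemma covers_cov: "covers s w \<longleftrightarrow> cov s w"
proof
  assume c: "covers s w"
  show "cov s w" unfolding cov_def
  proof (intro allI impI)
    fix k assume "k < length w"
    then obtain i where "occ_at w s i" "i \<le> k+1" "k+1 \<le> i + length s - 1"
      using c unfolding covers_def by (metis Suc_eq_plus1 Suc_leI le_add2)
    then show "\<exists>q. occ0 w s q \<and> q \<le> k \<and> k < q + length s"
      by (intro exI[of _ "i-1"]) (auto simp: occ_at_occ0)
  qed
next
  assume c: "cov s w"
  show "covers s w" unfolding covers_def
  proof (intro allI impI)
    fix k assume k: "1 \<le> k \<and> k \<le> length w"
    then obtain q where "occ0 w s q" "q \<le> k-1" "k-1 < q + length s"
      using c unfolding cov_def by (metis diff_less less_le_trans zero_less_one)
    then show "\<exists>i. occ_at w s i \<and> i \<le> k \<and> k \<le> i + length s - 1"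
      using k by (intro exI[of _ "q+1"]) (auto simp: occ_at_occ0)
  qed
qed

lemma per_cond: "(\<forall>i. 1 \<le> i \<and> i + p \<le> length x \<longrightarrow> x ! (i - 1) = x ! (i + p - 1)) \<longleftrightarrow> period p x"
  unfolding period_def
proof safe
  fix j assume h: "\<forall>i. 1 \<le> i \<and> i + p \<le> length x \<longrightarrow> x ! (i - 1) = x ! (i + p - 1)"
    and j: "j + p < length x"
  show "x!j = x!(j+p)" using h[rule_format, of "j+1"] j by simp
next
  fix i assume h: "\<forall>j. j + p < length x \<longrightarrow> x ! j = x ! (j + p)" and "1 \<le> i" "i + p \<le> length x"
  then show "x ! (i - 1) = x ! (i + p - 1)" using h[rule_format, of "i-1"] by simp
qed

lemma per_le: assumes "0 < m" shows "per x \<le> m \<longleftrightarrow> (\<exists>p. 0<p \<and> p \<le> m \<and> period p x)"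
proof -
  have d: "per x = (LEAST p. 0 < p \<and> period p x)" unfolding per_def per_cond ..
  have ex: "0 < Suc (length x) \<and> period (Suc (length x)) x" by (simp add: period_def)
  show ?thesis
  proof
    assume "per x \<le> m"
    then show "\<exists>p. 0<p \<and> p \<le> m \<and> period p x"
      using LeastI[of "\<lambda>p. 0 < p \<and> period p x", OF ex] d by auto
  next
    assume "\<exists>p. 0<p \<and> p \<le> m \<and> period p x"
    then obtain p where "0<p" "p \<le> m" "period p x" by blast
    then show "per x \<le> m" unfolding d using Least_le[of "\<lambda>p. 0 < p \<and> period p x" p] by auto
  qed
qed


lemma occ0_appR: "occ0 A s q \<Longrightarrow> occ0 (A@B) s q"
  unfolding occ0_def by (auto simp: nth_append)

lemma occ0_appL: "occ0 B s q \<Longrightarrow> occ0 (A@B) s (length A + q)"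
  unfolding occ0_def by (auto simp: nth_append)

lemma occ0_end: "occ0 (Z@s) s (length Z)"
  unfolding occ0_def by (auto simp: nth_append)

lemma occ0_start: "occ0 (s@Z) s 0"
  unfolding occ0_def by (auto simp: nth_append)

lemma occ0_decomp: "occ0 W s q \<Longrightarrow> W = take q W @ s @ drop (q + length s) W"
proof -
  assume o: "occ0 W s q"
  then have "take (length s) (drop q W) = s" unfolding occ0_def using take_eq_nth[of q s W] by blast
  then show ?thesis
    by (metis append_take_drop_id drop_drop add.commute)
qed

lemma cov_glue: assumes "cov s (A@s)" "cov s (s@B)" shows "cov s (A@s@B)"
  unfolding cov_def
proof (intro allI impI)
  fix k assume k: "k < length (A@s@B)"
  show "\<exists>q. occ0 (A@s@B) s q \<and> q \<le> k \<and> k < q + length s"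
  proof (cases "k < length A + length s")
    case True
    then obtain q where "occ0 (A@s) s q" "q \<le> k" "k < q + length s"
      using assms(1) unfolding cov_def by auto
    then show ?thesis using occ0_appR[of "A@s" s q B] by auto
  next
    case False
    have "k - length A < length (s@B)" using k False by auto
    then obtain q where "occ0 (s@B) s q" "q \<le> k - length A" "k - length A < q + length s"
      using assms(2) unfolding cov_def by blast
    then show ?thesis using occ0_appL[of "s@B" s q A] False by (intro exI[of _ "length A + q"]) auto
  qed
qed

lemma cov_extend_right: assumes "cov s A" "W = A@D" "W = Z@s" "length D \<le> length s"
  shows "cov s W"
  unfolding cov_def
proof (intro allI impI)
  fix k assume k: "k < length W"
  show "\<exists>q. occ0 W s q \<and> q \<le> k \<and> k < q + length s"
  proof (cases "k < length A")
    case True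
    then obtain q where "occ0 A s q" "q \<le> k" "k < q + length s"
      using assms(1) unfolding cov_def by auto
    then show ?thesis using occ0_appR[of A s q D] assms(2) by auto
  next
    case False
    have "length W = length A + length D" using assms(2) by simp
    moreover have "length W = length Z + length s" using assms(3) by simp
    ultimately show ?thesis using occ0_end[of Z s] assms(3,4) False k
      by (intro exI[of _ "length Z"]) auto
  qed
qed

lemma cov_extend_left: assumes "cov s B" "W = D@B" "W = s@Z" "length D \<le> length s"
  shows "cov s W"
  unfolding cov_def
proof (intro allI impI)
  fix k assume k: "k < length W"
  show "\<exists>q. occ0 W s q \<and> q \<le> k \<and> k < q + length s"
  proof (cases "k < length D")
    case False
    have "k - length D < length B" using k False assms(2) by auto
    then obtain q where "occ0 B s q" "q \<le> k - length D" "k - length D < q + length s"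
      using assms(1) unfolding cov_def by blast
    then show ?thesis using occ0_appL[of B s q D] assms(2) False
      by (intro exI[of _ "length D + q"]) auto
  next
    case True
    then show ?thesis using occ0_start[of s Z] assms(3,4)
      by (intro exI[of _ 0]) auto
  qed
qed

lemma period_take: "period p x \<Longrightarrow> period p (take n x)"
  unfolding period_def by auto

lemma period_drop: "period p x \<Longrightarrow> period p (drop n x)"
  unfolding period_def by (auto simp: add.assoc[symmetric] add.commute[of n])


lemma left_construct:
  assumes "period p (L@s)" "0 < p" "p \<le> length s"
  shows "\<exists>X. cov s (X@L@s)"
  using assms(1)
proof (induction "length L" arbitrary: L rule: less_induct)
  case less
  show ?case
  proof (cases "length L < p")
    case True
    define X where "X = take (p - length L) s"
    have lX: "length X = p - length L" using assms True unfolding X_def by simp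
    define W where "W = X@L@s"
    have lW: "length W = p + length s" using lX True unfolding W_def by simp
    have o0: "occ0 W s 0" unfolding occ0_def
    proof (intro conjI allI impI)
      show "0 + length s \<le> length W" using lW by simp
      fix t assume t: "t < length s"
      show "W!(0+t) = s!t"
      proof (cases "t < length X")
        case True
        then show ?thesis unfolding W_def X_def by (simp add: nth_append)
      next
        case False
        have "W!t = (L@s)!(t - length X)" unfolding W_def using False by (simp add: nth_append)
        also have "\<dots> = (L@s)!(t - length X + p)"
          using less.prems t lX False True unfolding period_def by simp
        also have "t - length X + p = length L + t" using lX False True by simp
        also have "(L@s)!(length L + t) = s!t" by (simp add: nth_append)
        finally show ?thesis by simp
      qed
    qed
    have op: "occ0 W s p"
      using occ0_end[of "X@L" s] lX True unfolding W_def by simp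
    have "cov s W" unfolding cov_def
    proof (intro allI impI)
      fix k assume "k < length W"
      then show "\<exists>q. occ0 W s q \<and> q \<le> k \<and> k < q + length s"
        using o0 op lW assms(3) by (cases "k < length s") (force, (rule exI[of _ p], simp))
    qed
    then show ?thesis unfolding W_def by blast
  next
    case False
    define V where "V = L@s"
    have oV: "occ0 V s (length L - p)" unfolding occ0_def
    proof (intro conjI allI impI)
      show "length L - p + length s \<le> length V" unfolding V_def by simp
      fix t assume t: "t < length s"
      have "V!(length L - p + t) = V!(length L - p + t + p)"
        using less.prems t False unfolding period_def V_def by simp
      also have "length L - p + t + p = length L + t" using False by simp
      finally show "V!(length L - p + t) = s!t" unfolding V_def by (simp add: nth_append)
    qed
    define L' where "L' = take (length L - p) L"
    have tV: "take (length L - p) V = L'" unfolding V_def L'_def by simp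
    have dec: "V = L' @ s @ drop (length L - p + length s) V"
      using occ0_decomp[OF oV] tV by simp
    have "period p (take (length L - p + length s) V)"
      using period_take less.prems unfolding V_def by blast
    moreover have "take (length L - p + length s) V = L'@s"
      using dec by (metis append_assoc append_eq_conv_conj length_append length_take min_def tV
          diff_le_self length_drop le_add_diff_inverse2 add_diff_cancel_right' )
    ultimately have pL': "period p (L'@s)" by simp
    have "length L' < length L" unfolding L'_def using False assms(2) by simp
    then obtain X where cX: "cov s (X@L'@s)" using less.hyps pL' by blast
    define D where "D = drop (length L - p + length s) V"
    have VD: "V = L'@s@D" using dec unfolding D_def .
    have "X@L@s = (X@L'@s)@D" using VD unfolding V_def by simp
    moreover have "length D \<le> length s" unfolding D_def V_def using False assms(3) by simp
    ultimately have "cov s (X@L@s)"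
      using cov_extend_right[OF cX, of "X@L@s" D "X@L"] by simp
    then show ?thesis by blast
  qed
qed


lemma right_construct:
  assumes "period p (s@R)" "0 < p" "p \<le> length s"
  shows "\<exists>Y. cov s (s@R@Y)"
  using assms(1)
proof (induction "length R" arbitrary: R rule: less_induct)
  case less
  show ?case
  proof (cases "length R < p")
    case True
    define Y where "Y = drop (length s + length R - p) s"
    have lY: "length Y = p - length R" using assms True unfolding Y_def by simp
    define W where "W = s@R@Y"
    have lW: "length W = p + length s" using lY True unfolding W_def by simp
    have o0: "occ0 W s 0" unfolding W_def by (rule occ0_start)
    have op: "occ0 W s p" unfolding occ0_def
    proof (intro conjI allI impI)
      show "p + length s \<le> length W" using lW by simp
      fix t assume t: "t < length s"
      show "W!(p+t) = s!t"
      proof (cases "p + t < length s + length R")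
        case True
        have "W = (s@R)@Y" unfolding W_def by simp
        then have "W!(p+t) = (s@R)!(p+t)" using True nth_append_left[of "p+t" "s@R" Y] by simp
        also have "\<dots> = (s@R)!(t+p)" by (simp add: add.commute)
        finally have "W!(p+t) = (s@R)!(t+p)" .
        also have "\<dots> = (s@R)!t" using less.prems True unfolding period_def by (simp add: add.commute)
        finally show ?thesis using t by (simp add: nth_append)
      next
        case False
        have "W = (s@R)@Y" unfolding W_def by simp
        then have "W!(p+t) = Y!(p + t - (length s + length R))"
          using False nth_append_right[of "s@R" "p+t" Y] by simp
        also have "\<dots> = s!(length s + length R - p + (p + t - (length s + length R)))"
          unfolding Y_def using False t True assms(3) by (simp add: nth_drop)
        also have "length s + length R - p + (p + t - (length s + length R)) = t"
          using False True assms(3) by simp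
        finally show ?thesis .
      qed
    qed
    have "cov s W" unfolding cov_def
    proof (intro allI impI)
      fix k assume "k < length W"
      then show "\<exists>q. occ0 W s q \<and> q \<le> k \<and> k < q + length s"
        using o0 op lW assms(3) by (cases "k < length s") (force, (rule exI[of _ p], simp))
    qed
    then show ?thesis unfolding W_def by blast
  next
    case False
    define V where "V = s@R"
    have oV: "occ0 V s p" unfolding occ0_def
    proof (intro conjI allI impI)
      show "p + length s \<le> length V" unfolding V_def using False by simp
      fix t assume t: "t < length s"
      have "V!(t + p) = V!t"
        using less.prems t False unfolding period_def V_def by simp
      then show "V!(p + t) = s!t" unfolding V_def using t by (simp add: nth_append add.commute)
    qed
    define R' where "R' = drop (p + length s) V"
    define P where "P = take p V"
    have dec: "V = P @ s @ R'"
      using occ0_decomp[OF oV] unfolding R'_def P_def .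
    have lP: "length P = p" using oV unfolding occ0_def P_def by simp
    have sR': "drop p V = s @ R'" unfolding dec using lP by simp
    have pR': "period p (s@R')" using period_drop[OF less.prems, of p] sR' unfolding V_def by simp
    have "length R' < length R" unfolding R'_def V_def using False assms(2) by simp
    then obtain Y where cY: "cov s (s@R'@Y)" using less.hyps pR' by blast
    have "s@R@Y = P @ (s@R'@Y)" using arg_cong[OF dec, of "\<lambda>x. x @ Y"] unfolding V_def by simp
    moreover have "length P \<le> length s" using assms(3) lP by simp
    ultimately have "cov s (s@R@Y)"
      using cov_extend_left[OF cY, of "s@R@Y" P "R@Y"] by simp
    then show ?thesis by blast
  qed
qed


lemma occ_shift_eq: "occ0 w s q \<Longrightarrow> occ0 w s (q+d) \<Longrightarrow> t < length s \<Longrightarrow> w!(q+t) = w!(q+d+t)"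
  unfolding occ0_def by (simp add: add.assoc)

lemma seed_imp_left:
  assumes "s \<noteq> []" "cov s w" "w = X@(L@s@R)@Y" and noL: "\<forall>j<length L. \<not> occ0 (L@s) s j"
  shows "\<exists>p. 0<p \<and> p \<le> length s \<and> period p (L@s)"
proof (cases "L = []")
  case True
  then show ?thesis using assms(1) by (intro exI[of _ "length s"]) (auto simp: period_def)
next
  case False
  have hw: "w!(length X + i) = (L@s)!i" if "i < length L + length s" for i
  proof -
    have "w = X @ ((L@s) @ (R@Y))" using assms(3) by simp
    then show ?thesis using that nth_append_left[of i "L@s" "R@Y"] by simp
  qed
  have "w = (X@L) @ s @ (R@Y)" using assms(3) by simp
  then have oP: "occ0 w s (length X + length L)"
    using occ0_appR[OF occ0_end[of "X@L" s], of "R@Y"] by simp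
  define k where "k = length X + length L - 1"
  have Lpos: "0 < length L" using False by simp
  moreover have "length w = length X + length L + length s + length R + length Y" using assms(3) by simp
  ultimately have "k < length w" unfolding k_def by linarith
  then obtain q where oq: "occ0 w s q" and qk: "q \<le> k" and kq: "k < q + length s"
    using assms(2) unfolding cov_def by blast
  show ?thesis
  proof (cases "length X \<le> q")
    case True
    have "occ0 (L@s) s (q - length X)" unfolding occ0_def
    proof (intro conjI allI impI)
      show "q - length X + length s \<le> length (L@s)" using qk False unfolding k_def by simp
      fix t assume t: "t < length s"
      have "(L@s)!(q - length X + t) = w!(length X + (q - length X + t))"
        using hw[of "q - length X + t"] qk False t unfolding k_def by simp
      also have "\<dots> = w!(q+t)" using True by simp
      also have "\<dots> = s!t" using oq t unfolding occ0_def by simp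
      finally show "(L@s)!(q - length X + t) = s!t" .
    qed
    moreover have "q - length X < length L" using qk Lpos True unfolding k_def by linarith
    ultimately show ?thesis using noL by blast
  next
    case True': False
    define d where "d = length X + length L - q"
    have d0: "0 < d" "d \<le> length s" "q + d = length X + length L"
      using True' kq False unfolding d_def k_def by auto
    have "period d (L@s)" unfolding period_def
    proof (intro allI impI)
      fix j assume j: "j + d < length (L@s)"
      define t where "t = length X + j - q"
      have t: "t < length s" using j d0 True' unfolding t_def by simp
      have e1: "length X + j = q + t" using True' unfolding t_def by simp
      have e2: "length X + (j + d) = q + d + t" using True' unfolding t_def by simp
      have "(L@s)!j = w!(length X + j)" using hw[of j] j by simp
      also have "\<dots> = w!(q+d+t)" unfolding e1 using occ_shift_eq[of w s q d t] oq oP d0 t by simp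
      also have "\<dots> = (L@s)!(j+d)" using hw[of "j+d"] j e2 by simp
      finally show "(L@s)!j = (L@s)!(j+d)" .
    qed
    then show ?thesis using d0 by blast
  qed
qed

lemma seed_imp_right:
  assumes "s \<noteq> []" "cov s w" "w = X@(L@s@R)@Y" and noR: "\<forall>j. 0 < j \<longrightarrow> \<not> occ0 (s@R) s j"
  shows "\<exists>p. 0<p \<and> p \<le> length s \<and> period p (s@R)"
proof (cases "R = []")
  case True
  then show ?thesis using assms(1) by (intro exI[of _ "length s"]) (auto simp: period_def)
next
  case False
  define P where "P = length X + length L"
  have hw: "w!(P + i) = (s@R)!i" if "i < length s + length R" for i
  proof -
    have "w = (X@L) @ ((s@R) @ Y)" using assms(3) by simp
    then have "w!(length (X@L) + i) = ((s@R)@Y)!i" by (simp only: nth_append_length_plus)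
    then show ?thesis using that nth_append_left[of i "s@R" Y] unfolding P_def by simp
  qed
  have "w = (X@L) @ s @ (R@Y)" using assms(3) by simp
  then have oP: "occ0 w s P"
    using occ0_appR[OF occ0_end[of "X@L" s], of "R@Y"] unfolding P_def by simp
  define k where "k = P + length s"
  have "k < length w" unfolding k_def P_def using assms(3) False by simp
  then obtain q where oq: "occ0 w s q" and qk: "q \<le> k" and kq: "k < q + length s"
    using assms(2) unfolding cov_def by blast
  have qP: "P < q" using kq unfolding k_def by simp
  show ?thesis
  proof (cases "q + length s \<le> P + length s + length R")
    case True
    have "occ0 (s@R) s (q - P)" unfolding occ0_def
    proof (intro conjI allI impI)
      show "q - P + length s \<le> length (s@R)" using True qP by simp
      fix t assume t: "t < length s"
      have "(s@R)!(q - P + t) = w!(P + (q - P + t))"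
        using hw[of "q - P + t"] True qP t by simp
      also have "\<dots> = w!(q+t)" using qP by simp
      also have "\<dots> = s!t" using oq t unfolding occ0_def by simp
      finally show "(s@R)!(q - P + t) = s!t" .
    qed
    then show ?thesis using noR qP by auto
  next
    case True': False
    define d where "d = q - P"
    have d0: "0 < d" "d \<le> length s" "P + d = q" "length R < d"
      using True' qP qk unfolding d_def k_def by auto
    have "period d (s@R)" unfolding period_def
    proof (intro allI impI)
      fix j assume j: "j + d < length (s@R)"
      have t: "j < length s" using j d0 by simp
      have "(s@R)!j = w!(P + j)" using hw[of j] j by simp
      also have "\<dots> = w!(P+d+j)" using occ_shift_eq[of w s P d j] oq oP d0 t by simp
      also have "\<dots> = (s@R)!(j+d)" using hw[of "j+d"] j by (simp add: add.commute add.left_commute)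
      finally show "(s@R)!j = (s@R)!(j+d)" .
    qed
    then show ?thesis using d0 by blast
  qed
qed


lemma abstract_seed:
  assumes "s \<noteq> []" and noL: "\<forall>j<length L. \<not> occ0 (L@s) s j"
    and noR: "\<forall>j. 0 < j \<longrightarrow> \<not> occ0 (s@R) s j"
  shows "seed s (L@s@R) \<longleftrightarrow> (\<exists>p. 0<p \<and> p \<le> length s \<and> period p (L@s))
                              \<and> (\<exists>p. 0<p \<and> p \<le> length s \<and> period p (s@R))"
proof
  assume "seed s (L@s@R)"
  then obtain w X Y where "cov s w" "w = X@(L@s@R)@Y"
    unfolding seed_def sublist_def covers_cov by blast
  then show "(\<exists>p. 0<p \<and> p \<le> length s \<and> period p (L@s))
           \<and> (\<exists>p. 0<p \<and> p \<le> length s \<and> period p (s@R))"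
    using seed_imp_left[OF assms(1) _ _ noL] seed_imp_right[OF assms(1) _ _ noR] by blast
next
  assume h: "(\<exists>p. 0<p \<and> p \<le> length s \<and> period p (L@s))
           \<and> (\<exists>p. 0<p \<and> p \<le> length s \<and> period p (s@R))"
  then obtain X where cX: "cov s (X@L@s)" using left_construct by blast
  from h obtain Y where cY: "cov s (s@R@Y)" using right_construct by blast
  have "cov s ((X@L)@s@(R@Y))" using cov_glue[of s "X@L" "R@Y"] cX cY by simp
  then have "covers s (X@(L@s@R)@Y)" unfolding covers_cov by simp
  moreover have "sublist (L@s@R) (X@(L@s@R)@Y)" unfolding sublist_def by blast
  moreover have "sublist s (L@s@R)" unfolding sublist_def by blast
  ultimately show "seed s (L@s@R)" unfolding seed_def by blast
qed

lemma occ0_take: "occ0 (take n u) s j \<Longrightarrow> occ0 u s j"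
  unfolding occ0_def by auto

lemma occ0_drop: "s \<noteq> [] \<Longrightarrow> occ0 (drop b u) s j \<Longrightarrow> occ0 u s (b+j)"
  unfolding occ0_def by (cases s) (auto simp: add.assoc)

theorem fact1:
  fixes u s :: "'a list"
  assumes "s \<noteq> []" and "sublist s u"
  shows "border_seed s u \<longleftrightarrow>
    max (per (fac u 1 (first_occ s u + length s - 1))) (per (fac u (last_occ s u) (length u)))
      \<le> length s"
proof -
  define m where "m = length s"
  have m0: "0 < m" using assms(1) unfolding m_def by simp
  obtain ps ss where u: "u = ps @ s @ ss" using assms(2) unfolding sublist_def by blast
  have o1: "occ_at u s (length ps + 1)" unfolding occ_at_occ0 u
    using occ0_appR[OF occ0_end[of ps s], of ss] by simp
  define F where "F = first_occ s u"
  have oF: "occ_at u s F" unfolding F_def first_occ_def using LeastI[of "occ_at u s", OF o1] .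
  have Fmin: "F \<le> i" if "occ_at u s i" for i
    unfolding F_def first_occ_def using Least_le[of "occ_at u s", OF that] .
  have bnd: "i \<le> length u" if "occ_at u s i" for i
    using that assms(1) unfolding occ_at_occ0 occ0_def by (cases s) auto
  define G where "G = last_occ s u"
  have oG: "occ_at u s G" unfolding G_def last_occ_def using GreatestI_nat[of "occ_at u s", OF o1 bnd] .
  have Gmax: "i \<le> G" if "occ_at u s i" for i
    unfolding G_def last_occ_def using Greatest_le_nat[of "occ_at u s", OF that bnd] .
  define a where "a = F - 1"
  define b where "b = G - 1"
  have F1: "F = a + 1" and oa: "occ0 u s a" using oF unfolding a_def occ_at_occ0 by auto
  have G1: "G = b + 1" and ob: "occ0 u s b" using oG unfolding b_def occ_at_occ0 by auto
  have amin: "a \<le> j" if "occ0 u s j" for j using Fmin[of "j+1"] that F1 unfolding occ_at_occ0 by simp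
  have bmax: "j \<le> b" if "occ0 u s j" for j using Gmax[of "j+1"] that G1 unfolding occ_at_occ0 by simp
  have tm: "take m (drop a u) = s" using oa take_eq_nth[of a s u] unfolding occ0_def m_def by blast
  have tb: "take m (drop b u) = s" using ob take_eq_nth[of b s u] unfolding occ0_def m_def by blast
  have la: "length (take a u) = a" using oa unfolding occ0_def by simp
  have e1: "fac u 1 (first_occ s u + length s - 1) = take a u @ s"
  proof -
    have "fac u 1 (first_occ s u + length s - 1) = take (a + m) u"
      unfolding fac_def F_def[symmetric] F1 m_def by simp
    also have "\<dots> = take a u @ s" using tm by (simp add: take_add)
    finally show ?thesis .
  qed
  have e2: "fac u (last_occ s u) (length u) = s @ drop (b + m) u"
  proof -
    have "fac u (last_occ s u) (length u) = drop b u"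
      unfolding fac_def G_def[symmetric] G1 by simp
    also have "\<dots> = take m (drop b u) @ drop m (drop b u)" by (rule append_take_drop_id[symmetric])
    also have "\<dots> = s @ drop (b + m) u" using tb by (simp add: add.commute)
    finally show ?thesis .
  qed
  have e3: "border_seed s u \<longleftrightarrow> seed s (take a u @ s @ drop (b + m) u)"
    unfolding border_seed_def F_def[symmetric] G_def[symmetric] F1 G1 m_def by simp
  have noL: "\<forall>j<length (take a u). \<not> occ0 (take a u @ s) s j"
  proof (intro allI impI notI)
    fix j assume "j < length (take a u)" "occ0 (take a u @ s) s j"
    then show False using occ0_take[of "a+m" u s j] amin[of j] la tm
      by (simp add: take_add)
  qed
  have noR: "\<forall>j. 0 < j \<longrightarrow> \<not> occ0 (s @ drop (b + m) u) s j"
  proof (intro allI impI notI)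
    fix j assume "0 < j" "occ0 (s @ drop (b + m) u) s j"
    moreover have "drop b u = s @ drop (b + m) u"
      using tb by (metis append_take_drop_id drop_drop add.commute)
    ultimately show False using occ0_drop[OF assms(1), of b u j] bmax[of "b+j"] by simp
  qed
  show ?thesis
    unfolding e1 e2 e3 max.bounded_iff per_le[OF assms(1)[unfolded length_greater_0_conv[symmetric]]]
    using abstract_seed[OF assms(1) noL noR] unfolding m_def by simp
qed

end
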